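(* Let $N$ be a fuzzy negation and let $D_\top$ be the greatest disjunctor, $D_\top(0,0)=0$ and $D_\top(x,y)=1$ otherwise. Then the $(A,N)$-implication $I_{D_\top,N}(x,y)=D_\top(N(x),y)$ does not satisfy (A5) with any aggregation function.
   Context: Aggregation function: $A:[0,1]^2\to[0,1]$ non-decreasing in each variable with $A(0,0)=0$, $A(1,1)=1$. Fuzzy negation: non-increasing $N:[0,1]\to[0,1]$ with $N(0)=1$, $N(1)=0$. A fuzzy set on a nonempty set $U$ is a map $U\to[0,1]$, normal if it attains $1$. "$I$ satisfies (A5) with $A$": for all nonempty sets $U,V$, all normal fuzzy sets $D$ on $U$, $B$ on $V$ and every $y\in V$, $\sup_{x\in U}A(D(x),I(D(x),B(y)))=B(y)$. *)

theory Defs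
  imports Complex_Main
begin

definition aggregation_function :: "(real \<Rightarrow> real \<Rightarrow> real) \<Rightarrow> bool" where
  "aggregation_function A \<longleftrightarrow>
     (\<forall>x\<in>{0..1}. \<forall>y\<in>{0..1}. A x y \<in> {0..1}) \<and>
     (\<forall>x\<in>{0..1}. \<forall>x'\<in>{0..1}. \<forall>y\<in>{0..1}. x \<le> x' \<longrightarrow> A x y \<le> A x' y) \<and>
     (\<forall>x\<in>{0..1}. \<forall>y\<in>{0..1}. \<forall>y'\<in>{0..1}. y \<le> y' \<longrightarrow> A x y \<le> A x y') \<and>
     A 0 0 = 0 \<and> A 1 1 = 1"

definition fuzzy_negation :: "(real \<Rightarrow> real) \<Rightarrow> bool" where
  "fuzzy_negation N \<longleftrightarrow>
     (\<forall>x\<in>{0..1}. N x \<in> {0..1}) \<and>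
     (\<forall>x\<in>{0..1}. \<forall>y\<in>{0..1}. x \<le> y \<longrightarrow> N y \<le> N x) \<and>
     N 0 = 1 \<and> N 1 = 0"

definition D_top :: "real \<Rightarrow> real \<Rightarrow> real" where
  "D_top x y = (if x = 0 \<and> y = 0 then 0 else 1)"

definition AN_implication :: "(real \<Rightarrow> real \<Rightarrow> real) \<Rightarrow> (real \<Rightarrow> real) \<Rightarrow> real \<Rightarrow> real \<Rightarrow> real" where
  "AN_implication D N x y = D (N x) y"

definition fuzzy_set_on :: "'a set \<Rightarrow> ('a \<Rightarrow> real) \<Rightarrow> bool" where
  "fuzzy_set_on U D \<longleftrightarrow> (\<forall>x\<in>U. D x \<in> {0..1})"

definition normal_fuzzy_set_on :: "'a set \<Rightarrow> ('a \<Rightarrow> real) \<Rightarrow> bool" where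
  "normal_fuzzy_set_on U D \<longleftrightarrow> fuzzy_set_on U D \<and> (\<exists>x\<in>U. D x = 1)"

definition A5_on :: "'a set \<Rightarrow> 'b set \<Rightarrow> (real \<Rightarrow> real \<Rightarrow> real) \<Rightarrow> (real \<Rightarrow> real \<Rightarrow> real) \<Rightarrow> bool" where
  "A5_on U V I A \<longleftrightarrow>
     (\<forall>D B y. normal_fuzzy_set_on U D \<longrightarrow> normal_fuzzy_set_on V B \<longrightarrow> y \<in> V \<longrightarrow>
        (SUP x\<in>U. A (D x) (I (D x) (B y))) = B y)"

definition satisfies_A5 :: "'u itself \<Rightarrow> 'v itself \<Rightarrow> (real \<Rightarrow> real \<Rightarrow> real) \<Rightarrow> (real \<Rightarrow> real \<Rightarrow> real) \<Rightarrow> bool" where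
  "satisfies_A5 TU TV I A \<longleftrightarrow>
     (\<forall>(U::'u set) (V::'v set). U \<noteq> {} \<longrightarrow> V \<noteq> {} \<longrightarrow> A5_on U V I A)"

end

theory Submission
  imports Defs
begin

theorem proposition4p11:
  assumes "fuzzy_negation N"
  shows "\<not> (\<exists>A. aggregation_function A \<and>
             satisfies_A5 TYPE(nat) TYPE(nat) (AN_implication D_top N) A)"
proof
  assume "\<exists>A. aggregation_function A \<and>
             satisfies_A5 TYPE(nat) TYPE(nat) (AN_implication D_top N) A"
  then obtain A where ag: "aggregation_function A"
    and s: "satisfies_A5 TYPE(nat) TYPE(nat) (AN_implication D_top N) A" by blast
  have N1: "N 1 = 0" using assms by (simp add: fuzzy_negation_def)
  have A11: "A 1 1 = 1" using ag by (simp add: aggregation_function_def)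
  have a5: "A5_on {0::nat} {0::nat,1} (AN_implication D_top N) A"
    using s unfolding satisfies_A5_def by (metis insert_not_empty)
  have n1: "normal_fuzzy_set_on {0::nat} (\<lambda>_. 1::real)"
    by (simp add: normal_fuzzy_set_on_def fuzzy_set_on_def)
  have n2: "normal_fuzzy_set_on {0::nat,1} (\<lambda>v::nat. if v = 0 then 1 else (1/2::real))"
    by (auto simp add: normal_fuzzy_set_on_def fuzzy_set_on_def)
  have "(SUP x\<in>{0::nat}. A ((\<lambda>_. 1::real) x) (AN_implication D_top N ((\<lambda>_. 1::real) x)
          ((\<lambda>v::nat. if v = 0 then 1 else (1/2::real)) 1)))
        = (\<lambda>v::nat. if v = 0 then 1 else (1/2::real)) 1"
    using a5 n1 n2 unfolding A5_on_def
    apply -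
    apply (erule allE[where x="\<lambda>_. 1::real"])
    apply (erule allE[where x="\<lambda>v::nat. if v = 0 then 1 else (1/2::real)"])
    apply (erule allE[where x="1::nat"])
    by blast
  then show False by (simp add: AN_implication_def D_top_def N1 A11)
qed

end
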